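(* Let $r,K,\mu$ satisfy Assumption 1 (in particular $\mu<1-K$). Then $$m^*\le\frac{\frac{\mu K}{r}(1-\mu)}{1-\mu-K\left(1-\frac{2\mu}{r}\right)}.$$
   Context: Assumption 1: $r\in(1,\infty)$, $\mu\in\left(0,\min\left(\frac r2,1-\frac1r,1-K,K\right)\right)$, $K\in\left(0,\min\left(1,\frac{r}{r-1}\left(1-\frac{\mu}{1-\mu}\right)\right)\right)$. $f_w(w,m):=w(1-(w+m))+\mu(m-w)$, $f_m(w,m):=rm\left(1-\frac{w+m}{K}\right)+\mu(w-m)$; $(w^*,m^* )$ is the unique solution in $(0,1)\times(0,K)$ of $f_w=f_m=0$. *)

theory Defs
  imports Complex_Main
begin

definition f_w :: "real \<Rightarrow> real \<Rightarrow> real \<Rightarrow> real" where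
  "f_w \<mu> w m = w * (1 - (w + m)) + \<mu> * (m - w)"

definition f_m :: "real \<Rightarrow> real \<Rightarrow> real \<Rightarrow> real \<Rightarrow> real \<Rightarrow> real" where
  "f_m r K \<mu> w m = r * m * (1 - (w + m) / K) + \<mu> * (w - m)"

definition assumption1 :: "real \<Rightarrow> real \<Rightarrow> real \<Rightarrow> bool" where
  "assumption1 r K \<mu> \<longleftrightarrow>
     1 < r \<and>
     0 < \<mu> \<and> \<mu> < min (min (r / 2) (1 - 1 / r)) (min (1 - K) K) \<and>
     0 < K \<and> K < min 1 (r / (r - 1) * (1 - \<mu> / (1 - \<mu>)))"

end

theory Submission
  imports Defs
begin

theorem mainTheorem20:
  fixes r K \<mu> ws ms :: real
  assumes A1: "assumption1 r K \<mu>"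
    and box: "0 < ws" "ws < 1" "0 < ms" "ms < K"
    and eq: "f_w \<mu> ws ms = 0" "f_m r K \<mu> ws ms = 0"
    and uniq: "\<And>w m. 0 < w \<Longrightarrow> w < 1 \<Longrightarrow> 0 < m \<Longrightarrow> m < K \<Longrightarrow>
                 f_w \<mu> w m = 0 \<Longrightarrow> f_m r K \<mu> w m = 0 \<Longrightarrow> w = ws \<and> m = ms"
  shows "ms \<le> ((\<mu> * K / r) * (1 - \<mu>)) / (1 - \<mu> - K * (1 - 2 * \<mu> / r))"
proof -
  define s where "s = ws + ms"
  have r1: "1 < r" and mu0: "0 < \<mu>" and mur: "\<mu> < r/2" and muK: "\<mu> < 1 - K" and K0: "0 < K"
    using A1 unfolding assumption1_def by auto
  have e1: "ws * (1 - s) = \<mu> * (ws - ms)" using eq(1) unfolding f_w_def s_def by (simp add: algebra_simps)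
  have e2': "r * ms * (1 - s / K) = \<mu> * (ms - ws)" using eq(2) unfolding f_m_def s_def by (simp add: algebra_simps)
  have "r * ms * (1 - s / K) * K = r * ms * (K - s)" using K0 by (simp add: field_simps)
  moreover have "r * ms * (1 - s / K) * K = \<mu> * (ms - ws) * K" using e2' by simp
  ultimately have "r * ms * (K - s) = \<mu> * (ms - ws) * K" by simp
  hence e2: "r * ms * (s - K) = \<mu> * K * (ws - ms)" by (simp add: algebra_simps)
  have e3: "ws * (1 - s - \<mu>) = - \<mu> * ms" using e1 s_def by (simp add: algebra_simps)
  have "\<mu> * ms > 0" using mu0 box by simp
  hence "ws * (1 - s - \<mu>) < 0" using e3 by linarith
  hence sg: "s > 1 - \<mu>" using box(1) by (simp add: mult_less_0_iff)
  hence sK: "s > K" using muK by linarith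
  have e4: "r * ms * (s - K) = \<mu> * K * (s - 2*ms)" using e2 s_def by (simp add: algebra_simps)
  have m2: "2 * ms \<le> K"
  proof (rule ccontr)
    assume "\<not> ?thesis"
    hence "s - 2*ms < s - K" by linarith
    hence "\<mu> * K * (s - 2*ms) < \<mu> * K * (s - K)" using mu0 K0 by simp
    hence "r * ms * (s - K) < (\<mu> * K) * (s - K)" using e4 by (simp add: algebra_simps)
    hence "r * ms < \<mu> * K" using sK by (simp add: mult_less_cancel_right)
    also have "\<mu> * K < (r/2) * K" using mur K0 by simp
    finally have "ms < K/2" using r1 by (simp add: field_simps)
    thus False using \<open>\<not> 2*ms \<le> K\<close> by linarith
  qed
  have rm: "r * ms \<ge> \<mu> * K"
  proof -
    have "\<mu> * K * (s - 2*ms) \<ge> \<mu> * K * (s - K)" using m2 mu0 K0 by simp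
    hence "r * ms * (s - K) \<ge> (\<mu> * K) * (s - K)" using e4 by (simp add: algebra_simps)
    thus ?thesis using sK by (simp add: mult_le_cancel_right)
  qed
  have key0: "(1 - \<mu> - s) * (r*ms - \<mu>*K) \<le> 0"
    using sg rm by (simp add: mult_nonpos_nonneg)
  have key: "r * ms * (1 - \<mu> - K) + 2 * \<mu> * K * ms \<le> \<mu> * K * (1 - \<mu>)"
    using key0 e4 by (simp add: algebra_simps)
  have D: "1 - \<mu> - K * (1 - 2 * \<mu> / r) = (r * (1 - \<mu> - K) + 2 * \<mu> * K) / r"
    using r1 by (simp add: field_simps)
  have Dp: "r * (1 - \<mu> - K) + 2 * \<mu> * K > 0" using r1 muK mu0 K0 by (simp add: add_pos_pos)
  have "ms * (r * (1 - \<mu> - K) + 2 * \<mu> * K) \<le> \<mu> * K * (1 - \<mu>)"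
    using key by (simp add: algebra_simps)
  hence "ms \<le> \<mu> * K * (1 - \<mu>) / (r * (1 - \<mu> - K) + 2 * \<mu> * K)"
    using Dp by (simp add: pos_le_divide_eq)
  also have "\<dots> = ((\<mu> * K / r) * (1 - \<mu>)) / (1 - \<mu> - K * (1 - 2 * \<mu> / r))"
  proof -
    have "r \<noteq> 0" using r1 by simp
    hence "(\<mu> * K * (1 - \<mu>) / r) / ((r * (1 - \<mu> - K) + 2 * \<mu> * K) / r) = \<mu> * K * (1 - \<mu>) / (r * (1 - \<mu> - K) + 2 * \<mu> * K)"
      by simp
    thus ?thesis unfolding D using \<open>r \<noteq> 0\<close> by (simp add: mult.assoc)
  qed
  finally show ?thesis .
qed

end
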